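(* Let $0<r<1$ and $0\le\phi\le\pi/2$, and let $\{\rho_{\theta(\eta)}:\eta\in H\subset\mathbb{R}^2\}$ be a two-parameter smooth submodel of the full qubit model such that at some $\eta_0$ one has $\rho_{\theta(\eta_0)}=\rho_{(0,0,r)}$ and $$D_1:=\partial_{\eta^1}\rho_{\theta(\eta)}\big|_{\eta_0}=\sigma_1,\qquad D_2:=\partial_{\eta^2}\rho_{\theta(\eta)}\big|_{\eta_0}=\cos\phi\,\sigma_2+\sin\phi\sqrt{1-r^2}\,\sigma_3 .$$ Let $G=\begin{pmatrix}g_1&g_2\\ g_2&g_3\end{pmatrix}$ be real symmetric positive definite. Then the Holevo bound of this submodel at $\eta_0$ is $$C^H(G)=\mathrm{tr}\,G+2r\cos\phi\sqrt{\det G}-r^2\sin^2\phi\,g_1\qquad\text{if } r\,g_1\sin^2\phi<\sqrt{\det G}\cos\phi,$$ and $$C^H(G)=\mathrm{tr}\,G+\frac{\det G}{g_1}\Big(\frac{\cos\phi}{\sin\phi}\Big)^2\qquad\text{otherwise}.$$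
   Context: Full qubit model: $\rho_\theta=\frac12I+\sum_{i=1}^3\theta^i\sigma_i$ on $\mathbb{C}^2$, $\|\theta\|<1$, with $\sigma_1=\frac12\begin{pmatrix}0&1\\1&0\end{pmatrix}$, $\sigma_2=\frac12\begin{pmatrix}0&-i\\i&0\end{pmatrix}$, $\sigma_3=\frac12\begin{pmatrix}1&0\\0&-1\end{pmatrix}$. For a pair $\vec X=(X^1,X^2)$ of Hermitian $2\times2$ matrices, $Z^{k,j}(\vec X)=\mathrm{Tr}\,\rho_{(0,0,r)}X^kX^j$ and $C(G,\vec X)=\mathrm{tr}\sqrt G\,\mathrm{Re}Z(\vec X)\sqrt G+\mathrm{tr}|\sqrt G\,\mathrm{Im}Z(\vec X)\sqrt G|$, where $\mathrm{Re}W=(W+\bar W)/2$, $\mathrm{Im}W=(W-\bar W)/(2i)$, $|A|=(A^*A)^{1/2}$. The Holevo bound of the submodel at $\eta_0$ is $C^H(G)=\min\{C(G,\vec X):\mathrm{Tr}\,D_kX^j=\delta^j_k,\ j,k=1,2\}$. *)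

theory Defs
  imports "HOL-Analysis.Analysis"
begin

type_synonym cmat = "complex^2^2"
type_synonym rmat = "real^2^2"

definition cscale :: "complex \<Rightarrow> cmat \<Rightarrow> cmat" where
  "cscale c A = (\<chi> i j. c * A$i$j)"

definition cadj :: "cmat \<Rightarrow> cmat" where
  "cadj A = (\<chi> i j. cnj (A$j$i))"

definition hermitian :: "cmat \<Rightarrow> bool" where
  "hermitian A \<longleftrightarrow> cadj A = A"

text \<open>The (halved) Pauli matrices sigma_1, sigma_2, sigma_3.\<close>
definition sigma :: "3 \<Rightarrow> cmat" where
  "sigma i = (if i = 1 then vector [vector [0, 1/2], vector [1/2, 0]]
              else if i = 2 then vector [vector [0, -\<i>/2], vector [\<i>/2, 0]]
              else vector [vector [1/2, 0], vector [0, -1/2]])"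

definition rho :: "real^3 \<Rightarrow> cmat" where
  "rho \<theta> = cscale (1/2) (mat 1) + (\<Sum>i\<in>UNIV. (\<theta>$i) *\<^sub>R sigma i)"

definition rpsd :: "rmat \<Rightarrow> bool" where
  "rpsd S \<longleftrightarrow> transpose S = S \<and> (\<forall>x. 0 \<le> x \<bullet> (S *v x))"

definition rpd :: "rmat \<Rightarrow> bool" where
  "rpd S \<longleftrightarrow> transpose S = S \<and> (\<forall>x. x \<noteq> 0 \<longrightarrow> 0 < x \<bullet> (S *v x))"

definition msqrt :: "rmat \<Rightarrow> rmat" where
  "msqrt A = (THE S. rpsd S \<and> S ** S = A)"

text \<open>Matrix absolute value |A| = (A^* A)^{1/2} (A real, so A^* = A^T).\<close>
definition mabs :: "rmat \<Rightarrow> rmat" where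
  "mabs A = msqrt (transpose A ** A)"

definition Zmat :: "real \<Rightarrow> (2 \<Rightarrow> cmat) \<Rightarrow> complex^2^2" where
  "Zmat r X = (\<chi> k j. trace (rho (vector [0, 0, r]) ** X k ** X j))"

definition ReM :: "complex^2^2 \<Rightarrow> rmat" where
  "ReM W = (\<chi> k j. Re (W$k$j))"

definition ImM :: "complex^2^2 \<Rightarrow> rmat" where
  "ImM W = (\<chi> k j. Im (W$k$j))"

definition holevoC :: "real \<Rightarrow> rmat \<Rightarrow> (2 \<Rightarrow> cmat) \<Rightarrow> real" where
  "holevoC r G X =
     trace (msqrt G ** ReM (Zmat r X) ** msqrt G)
   + trace (mabs (msqrt G ** ImM (Zmat r X) ** msqrt G))"

definition admissible :: "(2 \<Rightarrow> cmat) \<Rightarrow> (2 \<Rightarrow> cmat) \<Rightarrow> bool" where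
  "admissible D X \<longleftrightarrow> (\<forall>j. hermitian (X j)) \<and>
     (\<forall>j k. trace (D k ** X j) = (if j = k then 1 else 0))"

text \<open>v is the Holevo bound C^H(G) = min { C(G,X) : X admissible }:
  the minimum exists and equals v.\<close>
definition is_holevo_bound :: "real \<Rightarrow> (2 \<Rightarrow> cmat) \<Rightarrow> rmat \<Rightarrow> real \<Rightarrow> bool" where
  "is_holevo_bound r D G v \<longleftrightarrow>
     (\<exists>X. admissible D X \<and> holevoC r G X = v) \<and>
     (\<forall>X. admissible D X \<longrightarrow> v \<le> holevoC r G X)"

end

theory Submission
  imports Defs
begin


lemma m2_eq: "(A::'a^2^2) = B \<longleftrightarrow> A$1$1 = B$1$1 \<and> A$1$2 = B$1$2 \<and> A$2$1 = B$2$1 \<and> A$2$2 = B$2$2"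
  by (auto simp: vec_eq_iff forall_2)

lemma scaleR_ent: "((c::real) *\<^sub>R (A::cmat))$i$j = complex_of_real c * A$i$j"
  by (simp only: vector_scaleR_component complex_scaleR) (simp add: complex_eq_iff)

lemma sig1: "sigma 1 $1$1 = 0" "sigma 1 $1$2 = 1/2" "sigma 1 $2$1 = 1/2" "sigma 1 $2$2 = 0"
  by (simp_all add: sigma_def)
lemma sig2: "sigma 2 $1$1 = 0" "sigma 2 $1$2 = -\<i>/2" "sigma 2 $2$1 = \<i>/2" "sigma 2 $2$2 = 0"
  by (simp_all add: sigma_def)
lemma sig3: "sigma 3 $1$1 = 1/2" "sigma 3 $1$2 = 0" "sigma 3 $2$1 = 0" "sigma 3 $2$2 = -1/2"
  by (simp_all add: sigma_def)

lemma rho0: "rho (vector [0,0,r]) = vector [vector [complex_of_real ((1+r)/2), 0], vector [0, complex_of_real ((1-r)/2)]]"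
  by (simp add: m2_eq rho_def sum_3 cscale_def sig1 sig2 sig3 mat_def scaleR_ent field_simps del: complex_scaleR) (simp add: scaleR_conv_of_real)

lemma mmul2: "((A::'a::semiring_1^2^2) ** B)$i$j = A$i$1 * B$1$j + A$i$2 * B$2$j"
  by (simp add: matrix_matrix_mult_def sum_2)
lemma trace2: "trace (A::'a::semiring_1^2^2) = A$1$1 + A$2$2"
  by (simp add: trace_def sum_2)


lemma quad2: "(x::real^2) \<bullet> (S *v x) = x$1*(S$1$1*x$1 + S$1$2*x$2) + x$2*(S$2$1*x$1+S$2$2*x$2)"
  by (simp add: inner_vec_def sum_2 matrix_vector_mult_def)

lemma rpsd_facts:
  assumes "rpsd S"
  shows "S$1$2 = S$2$1" "S$1$1 \<ge> 0" "S$2$2 \<ge> 0" "S$1$1 * S$2$2 - S$1$2 * S$1$2 \<ge> 0"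
proof -
  have sym: "transpose S = S" and q: "\<And>x. 0 \<le> x \<bullet> (S *v x)" using assms by (auto simp: rpsd_def)
  have "(transpose S)$2$1 = S$2$1" using sym by simp
  then show s: "S$1$2 = S$2$1" by (simp add: transpose_def)
  have "0 \<le> (vector [1,0]::real^2) \<bullet> (S *v vector [1,0])" by (rule q)
  then show a: "S$1$1 \<ge> 0" by (simp add: quad2)
  have "0 \<le> (vector [0,1]::real^2) \<bullet> (S *v vector [0,1])" by (rule q)
  then show e: "S$2$2 \<ge> 0" by (simp add: quad2)
  show "S$1$1 * S$2$2 - S$1$2 * S$1$2 \<ge> 0"
  proof (cases "S$1$1 = 0")
    case True
    have "0 \<le> (vector [-(S$2$2+1), S$1$2]::real^2) \<bullet> (S *v vector [-(S$2$2+1), S$1$2])" by (rule q)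
    then have "0 \<le> - (S$1$2 * S$1$2) * (S$2$2 + 2)" using True s by (simp add: quad2 algebra_simps power2_eq_square)
    moreover have "S$2$2 + 2 > 0" using e by simp
    ultimately have "S$1$2 * S$1$2 \<le> 0" by (simp add: mult_le_0_iff)
    then have "S$1$2 = 0" by (meson mult_eq_0_iff order_antisym zero_le_square)
    then show ?thesis using True by simp
  next
    case False
    then have a': "S$1$1 > 0" using a by simp
    have "0 \<le> (vector [S$1$2, -S$1$1]::real^2) \<bullet> (S *v vector [S$1$2, -S$1$1])" by (rule q)
    then have "0 \<le> S$1$1 * (S$1$1 * S$2$2 - S$1$2 * S$1$2)" using s by (simp add: quad2 algebra_simps power2_eq_square)
    then show ?thesis using a' by (simp add: zero_le_mult_iff)
  qed
qed

lemma rpsd_intro: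
  assumes "S$1$2 = S$2$1" "S$1$1 \<ge> 0" "S$2$2 \<ge> 0" "S$1$1 * S$2$2 - S$1$2 * S$1$2 \<ge> 0"
  shows "rpsd S"
  unfolding rpsd_def
proof (intro conjI allI)
  show "transpose S = S" using assms(1) by (simp add: m2_eq transpose_def)
  fix x :: "real^2"
  let ?a = "S$1$1" and ?b = "S$1$2" and ?e = "S$2$2"
  have eq: "x \<bullet> (S *v x) = ?a * x$1^2 + 2 * ?b * x$1 * x$2 + ?e * x$2^2"
    using assms(1) by (simp add: quad2 algebra_simps power2_eq_square)
  show "0 \<le> x \<bullet> (S *v x)"
  proof (cases "?a = 0")
    case True
    then have "?b * ?b \<le> 0" using assms(4) by simp
    then have "?b = 0" by (meson mult_eq_0_iff order_antisym zero_le_square)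
    then show ?thesis using True eq assms(3) by simp
  next
    case False
    then have a: "?a > 0" using assms(2) by simp
    have "?a * (x \<bullet> (S *v x)) = (?a * x$1 + ?b * x$2)^2 + (?a * ?e - ?b * ?b) * x$2^2"
      unfolding eq by (simp add: algebra_simps power2_eq_square)
    also have "\<dots> \<ge> 0" using assms(4) by simp
    finally show ?thesis using a by (simp add: zero_le_mult_iff)
  qed
qed


lemma sq_eq_nonneg: "(x::real) \<ge> 0 \<Longrightarrow> y \<ge> 0 \<Longrightarrow> x*x = y*y \<Longrightarrow> x = y"
  by (metis power2_eq_square power2_eq_imp_eq)

lemma psd_sqrt_unique:
  assumes S: "rpsd S" and T: "rpsd T" and eq: "S ** S = T ** T"
  shows "S = T"
proof -
  obtain a b e where sa: "S$1$1 = a" and sb: "S$1$2 = b" "S$2$1 = b" and se: "S$2$2 = e" using rpsd_facts(1)[OF S] by auto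
  obtain a' b' e' where ta: "T$1$1 = a'" and tb: "T$1$2 = b'" "T$2$1 = b'" and te: "T$2$2 = e'" using rpsd_facts(1)[OF T] by auto
  have pa: "a \<ge> 0" "e \<ge> 0" "a*e - b*b \<ge> 0" using rpsd_facts(2-4)[OF S] sa sb se by auto
  have pt: "a' \<ge> 0" "e' \<ge> 0" "a'*e' - b'*b' \<ge> 0" using rpsd_facts(2-4)[OF T] ta tb te by auto
  have e1: "a*a + b*b = a'*a' + b'*b'" using arg_cong[OF eq, of "\<lambda>M. M$1$1"] sa sb se ta tb te by (simp add: mmul2)
  have e2: "a*b + b*e = a'*b' + b'*e'" using arg_cong[OF eq, of "\<lambda>M. M$1$2"] sa sb se ta tb te by (simp add: mmul2)
  have e3: "b*b + e*e = b'*b' + e'*e'" using arg_cong[OF eq, of "\<lambda>M. M$2$2"] sa sb se ta tb te by (simp add: mmul2)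
  have "(a*e - b*b)*(a*e-b*b) = (a*a + b*b)*(b*b+e*e) - (a*b+b*e)*(a*b+b*e)" by (simp add: algebra_simps)
  also have "\<dots> = (a'*a' + b'*b')*(b'*b'+e'*e') - (a'*b'+b'*e')*(a'*b'+b'*e')" using e1 e2 e3 by simp
  also have "\<dots> = (a'*e' - b'*b')*(a'*e'-b'*b')" by (simp add: algebra_simps)
  finally have "a*e - b*b = a'*e' - b'*b'" using pa pt sq_eq_nonneg by blast
  then have "(a+e)*(a+e) = (a'+e')*(a'+e')" using e1 e3 by (simp add: algebra_simps)
  then have tau: "a + e = a' + e'" using pa pt sq_eq_nonneg by (meson add_nonneg_nonneg)
  have abe: "a = a' \<and> b = b' \<and> e = e'"
  proof (cases "a + e = 0")
    case True
    then have "a = 0" "e = 0" "a' = 0" "e' = 0" using pa pt tau by linarith+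
    then show ?thesis using pa(3) pt(3) by (simp add: mult_le_0_iff) (metis mult_eq_0_iff order_antisym zero_le_square neg_le_0_iff_le)
  next
    case False
    have "b * (a+e) = b' * (a+e)"
    proof -
      have x1: "b*(a+e) = a*b+b*e" by (simp add: algebra_simps)
      have x2: "b'*(a+e) = b'*(a'+e')" using tau by simp
      have x3: "b'*(a'+e') = a'*b'+b'*e'" by (simp add: algebra_simps)
      show ?thesis using x1 x2 x3 e2 by simp
    qed
    then have bb: "b = b'" using False by simp
    have "(a - e) * (a+e) = (a*a + b*b) - (b*b + e*e)" by (simp add: algebra_simps)
    also have "\<dots> = (a'*a' + b'*b') - (b'*b' + e'*e')" using e1 e3 by simp
    also have "\<dots> = (a' - e') * (a'+e')" by (simp add: algebra_simps)
    also have "\<dots> = (a' - e') * (a+e)" using tau by simp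
    finally have "(a - e) * (a+e) = (a'-e')*(a+e)" .
    then have "a - e = a' - e'" using False by simp
    then show ?thesis using bb tau by simp
  qed
  then show ?thesis using sa sb se ta tb te by (simp add: m2_eq)
qed

lemma msqrt_eq:
  assumes "rpsd S" "S ** S = A"
  shows "msqrt A = S"
  unfolding msqrt_def
proof (rule the_equality)
  show "rpsd S \<and> S ** S = A" using assms by simp
  fix T assume "rpsd T \<and> T ** T = A"
  then show "T = S" using psd_sqrt_unique assms by metis
qed


lemma rpd_facts:
  assumes "rpd G"
  shows "G$1$2 = G$2$1" "G$1$1 > 0" "G$1$1 * G$2$2 - G$1$2 * G$1$2 > 0"
proof -
  have sym: "transpose G = G" and q: "\<And>x. x \<noteq> 0 \<Longrightarrow> 0 < x \<bullet> (G *v x)" using assms by (auto simp: rpd_def)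
  have "(transpose G)$2$1 = G$2$1" using sym by simp
  then show s: "G$1$2 = G$2$1" by (simp add: transpose_def)
  have n1: "(vector [1,0]::real^2) \<noteq> 0" by (metis vector_2(1) zero_index zero_neq_one)
  have "0 < (vector [1,0]::real^2) \<bullet> (G *v vector [1,0])" by (rule q[OF n1])
  then show a: "G$1$1 > 0" by (simp add: quad2)
  have "(vector [G$1$2, -G$1$1]::real^2) \<noteq> 0" using a by (metis vector_2(2) zero_index neg_equal_0_iff_equal less_irrefl)
  then have "0 < (vector [G$1$2, -G$1$1]::real^2) \<bullet> (G *v vector [G$1$2, -G$1$1])" by (rule q)
  then have "0 < G$1$1 * (G$1$1 * G$2$2 - G$1$2 * G$1$2)" using s by (simp add: quad2 algebra_simps power2_eq_square)
  then show "G$1$1 * G$2$2 - G$1$2 * G$1$2 > 0" using a by (simp add: zero_less_mult_iff)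
qed

lemma rpd_rpsd: "rpd G \<Longrightarrow> rpsd G"
  unfolding rpd_def rpsd_def by (metis order_le_less inner_zero_left)

lemma msqrt_G:
  assumes "rpd G"
  shows "rpsd (msqrt G) \<and> msqrt G ** msqrt G = G"
proof -
  define a where "a = G$1$1"
  define b where "b = G$1$2"
  define e where "e = G$2$2"
  have b2: "G$2$1 = b" using rpd_facts(1)[OF assms] b_def by simp
  have a: "a > 0" and dp: "a*e - b*b > 0" using rpd_facts(2,3)[OF assms] a_def b_def e_def by auto
  have "b*b \<ge> 0" by simp
  then have "a*e > 0" using dp by linarith
  then have e: "e > 0" using a by (simp add: zero_less_mult_iff)
  define d where "d = sqrt (a*e - b*b)"
  have d: "d > 0" "d*d = a*e - b*b" using dp by (auto simp: d_def)
  define t where "t = sqrt (a + e + 2*d)"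
  have t: "t > 0" "t*t = a + e + 2*d" using a e d by (auto simp: t_def)
  define S :: rmat where "S = vector [vector [(a+d)/t, b/t], vector [b/t, (e+d)/t]]"
  have ps: "rpsd S"
  proof (rule rpsd_intro)
    show "S$1$2 = S$2$1" by (simp add: S_def)
    show "S$1$1 \<ge> 0" using a d t by (simp add: S_def)
    show "S$2$2 \<ge> 0" using e d t by (simp add: S_def)
    have "S$1$1 * S$2$2 - S$1$2 * S$1$2 = ((a+d)*(e+d) - b*b)/(t*t)" using t(1) by (simp add: S_def field_simps)
    also have "\<dots> \<ge> 0"
    proof (intro divide_nonneg_nonneg)
      have "a*d \<ge> 0" "d*e \<ge> 0" "d*d \<ge> 0" using a e d(1) by simp_all
      moreover have "(a+d)*(e+d) - b*b = a*d + d*e + d*d + (a*e - b*b)" by (simp add: algebra_simps)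
      ultimately show "(a+d)*(e+d) - b*b \<ge> 0" using dp by linarith
    qed simp
    finally show "S$1$1 * S$2$2 - S$1$2 * S$1$2 \<ge> 0" .
  qed
  have sq: "S ** S = G"
  proof -
    have tt: "t*t \<noteq> 0" using t(1) by simp
    have i1: "((a+d)*(a+d) + b*b) = a * (t*t)" using t(2) d(2) by (simp add: algebra_simps)
    have i2: "(b*(a+d) + b*(e+d)) = b * (t*t)" using t(2) by (simp add: algebra_simps)
    have i3: "(b*b + (e+d)*(e+d)) = e * (t*t)" using t(2) d(2) by (simp add: algebra_simps)
    have x1: "(S**S)$1$1 = ((a+d)*(a+d) + b*b)/(t*t)" using t(1) by (simp add: S_def mmul2 field_simps)
    have x2: "(S**S)$1$2 = (b*(a+d) + b*(e+d))/(t*t)" using t(1) by (simp add: S_def mmul2 field_simps)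
    have x3: "(S**S)$2$1 = (b*(a+d) + b*(e+d))/(t*t)" using t(1) by (simp add: S_def mmul2 field_simps)
    have x4: "(S**S)$2$2 = (b*b + (e+d)*(e+d))/(t*t)" using t(1) by (simp add: S_def mmul2 field_simps)
    show ?thesis unfolding m2_eq x1 x2 x3 x4 i1 i2 i3 using tt a_def b_def e_def b2 by simp
  qed
  show ?thesis using msqrt_eq[OF ps sq] ps sq by simp
qed


lemma trace_SRS: "S ** S = G \<Longrightarrow> trace (S ** R ** S) = trace (G ** (R::rmat))"
  by (metis trace_mul_sym matrix_mul_assoc)

lemma trace_mabs_anti:
  assumes S: "S$1$2 = S$2$1" and I: "I$1$1 = 0" "I$2$2 = 0" "I$2$1 = - I$1$2"
  shows "trace (mabs (S ** I ** S)) = 2 * \<bar>I$1$2 * det S\<bar>"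
proof -
  define k where "k = I$1$2 * det S"
  have M: "S ** I ** S = vector [vector [0, k], vector [-k, 0]]"
    using S I by (simp add: m2_eq mmul2 k_def det_2 algebra_simps)
  have MM: "transpose (S ** I ** S) ** (S ** I ** S) = vector [vector [k*k, 0], vector [0, k*k]]"
    unfolding M by (simp add: m2_eq mmul2 transpose_def)
  define T :: rmat where "T = vector [vector [\<bar>k\<bar>, 0], vector [0, \<bar>k\<bar>]]"
  have pT: "rpsd T" by (rule rpsd_intro) (simp_all add: T_def)
  have sT: "T ** T = vector [vector [k*k, 0], vector [0, k*k]]" by (simp add: T_def m2_eq mmul2 abs_mult_self_eq)
  have "mabs (S ** I ** S) = T" unfolding mabs_def MM by (rule msqrt_eq[OF pT sT])
  then show ?thesis by (simp add: trace2 T_def k_def)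
qed

lemma holevo_red:
  assumes G: "rpd G" and I: "I$1$1 = 0" "I$2$2 = 0" "I$2$1 = - I$1$2"
  shows "trace (msqrt G ** R ** msqrt G) + trace (mabs (msqrt G ** I ** msqrt G))
         = trace (G ** R) + 2 * \<bar>I$1$2\<bar> * sqrt (det G)"
proof -
  have h: "rpsd (msqrt G)" "msqrt G ** msqrt G = G" using msqrt_G[OF G] by auto
  have "det G = det (msqrt G) * det (msqrt G)" using h(2) det_mul by metis
  then have "sqrt (det G) = \<bar>det (msqrt G)\<bar>" by (simp add: real_sqrt_abs2)
  moreover have "trace (mabs (msqrt G ** I ** msqrt G)) = 2 * \<bar>I$1$2 * det (msqrt G)\<bar>"
    by (rule trace_mabs_anti[OF rpsd_facts(1)[OF h(1)] I])
  ultimately show ?thesis using trace_SRS[OF h(2)] by (simp add: abs_mult)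
qed


lemma herm2:
  assumes "hermitian A"
  shows "A$1$1 = complex_of_real (Re (A$1$1))" "A$2$2 = complex_of_real (Re (A$2$2))" "A$2$1 = cnj (A$1$2)"
proof -
  have h: "\<And>i j. cnj (A$j$i) = A$i$j" using assms unfolding hermitian_def cadj_def
    by (metis vec_lambda_beta)
  show "A$1$1 = complex_of_real (Re (A$1$1))" using h[of 1 1] by (metis Reals_cnj_iff complex_is_Real_iff of_real_Re)
  show "A$2$2 = complex_of_real (Re (A$2$2))" using h[of 2 2] by (metis Reals_cnj_iff complex_is_Real_iff of_real_Re)
  show "A$2$1 = cnj (A$1$2)" using h[of 1 2] by simp
qed

lemma Z_ent:
  assumes hk: "hermitian (X k)" and hj: "hermitian (X j)"
  shows "ReM (Zmat r X) $k$j = (1+r)/2 * Re (X k$1$1) * Re (X j$1$1) + (1-r)/2 * Re (X k$2$2) * Re (X j$2$2)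
            + Re (X k$1$2) * Re (X j$1$2) + Im (X k$1$2) * Im (X j$1$2)"
    and "ImM (Zmat r X) $k$j = r * (Im (X k$1$2) * Re (X j$1$2) - Re (X k$1$2) * Im (X j$1$2))"
proof -
  have z: "Zmat r X $k$j = complex_of_real ((1+r)/2) * (X k$1$1 * X j$1$1 + X k$1$2 * X j$2$1)
     + complex_of_real ((1-r)/2) * (X k$2$1 * X j$1$2 + X k$2$2 * X j$2$2)"
    by (simp add: Zmat_def rho0 trace2 mmul2 algebra_simps)
  note H = herm2[OF hk] herm2[OF hj]
  have z2: "Zmat r X $k$j = complex_of_real ((1+r)/2) * (complex_of_real (Re (X k$1$1)) * complex_of_real (Re (X j$1$1)) + X k$1$2 * cnj (X j$1$2))
     + complex_of_real ((1-r)/2) * (cnj (X k$1$2) * X j$1$2 + complex_of_real (Re (X k$2$2)) * complex_of_real (Re (X j$2$2)))"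
    unfolding z using H by metis
  show "ReM (Zmat r X) $k$j = (1+r)/2 * Re (X k$1$1) * Re (X j$1$1) + (1-r)/2 * Re (X k$2$2) * Re (X j$2$2)
            + Re (X k$1$2) * Re (X j$1$2) + Im (X k$1$2) * Im (X j$1$2)"
    by (simp add: ReM_def) (simp add: z2 field_simps)
  show "ImM (Zmat r X) $k$j = r * (Im (X k$1$2) * Re (X j$1$2) - Re (X k$1$2) * Im (X j$1$2))"
    by (simp add: ImM_def) (simp add: z2 field_simps)
qed


lemma tr_D1:
  assumes "hermitian A"
  shows "trace (sigma 1 ** A) = complex_of_real (Re (A$1$2))"
proof -
  note H = herm2[OF assms]
  have "trace (sigma 1 ** A) = (A$2$1 + A$1$2)/2" by (simp add: trace2 mmul2 sig1)
  also have "\<dots> = (cnj (A$1$2) + A$1$2)/2" using H by simp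
  also have "\<dots> = complex_of_real (Re (A$1$2))" by (simp add: complex_eq_iff)
  finally show ?thesis .
qed

lemma tr_D2:
  assumes "hermitian A"
  shows "trace ((c *\<^sub>R sigma 2 + t *\<^sub>R sigma 3) ** A) = complex_of_real (- c * Im (A$1$2) + t * (Re (A$1$1) - Re (A$2$2))/2)"
proof -
  note H = herm2[OF assms]
  have "trace ((c *\<^sub>R sigma 2 + t *\<^sub>R sigma 3) ** A) =
      complex_of_real c * (-\<i>/2 * A$2$1 + \<i>/2 * A$1$2) + complex_of_real t * (A$1$1/2 - A$2$2/2)"
    by (simp add: trace2 mmul2 sig2 sig3 scaleR_ent del: complex_scaleR) (simp add: scaleR_conv_of_real algebra_simps)
  also have "\<dots> = complex_of_real c * (-\<i>/2 * cnj (A$1$2) + \<i>/2 * A$1$2) + complex_of_real t * (complex_of_real (Re (A$1$1))/2 - complex_of_real (Re (A$2$2))/2)"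
    using H by metis
  also have "\<dots> = complex_of_real (- c * Im (A$1$2) + t * (Re (A$1$1) - Re (A$2$2))/2)"
    by (simp add: complex_eq_iff field_simps)
  finally show ?thesis .
qed



definition QG :: "real \<Rightarrow> real \<Rightarrow> real \<Rightarrow> real \<Rightarrow> real \<Rightarrow> real" where
  "QG g1 g2 g3 x y = g1*x*x + 2*g2*x*y + g3*y*y"

lemma QG_bound:
  assumes "g1 > 0" "d*d = g1*g3 - g2*g2"
  shows "g1 * QG g1 g2 g3 x y \<ge> d*d*y*y" "QG g1 g2 g3 x y \<ge> 0"
proof -
  have "g1 * QG g1 g2 g3 x y = (g1*x + g2*y)^2 + (g1*g3 - g2*g2)*y*y"
    by (simp add: QG_def algebra_simps power2_eq_square)
  then have "g1 * QG g1 g2 g3 x y = (g1*x + g2*y)^2 + d*d*y*y" using assms(2) by simp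
  then show 1: "g1 * QG g1 g2 g3 x y \<ge> d*d*y*y" by simp
  have "0 \<le> (d*y)*(d*y)" by (rule zero_le_square)
  then have "d*d*y*y \<ge> 0" by (simp add: mult_ac)
  then have "g1 * QG g1 g2 g3 x y \<ge> 0" using 1 by linarith
  then show "QG g1 g2 g3 x y \<ge> 0" using assms(1) by (simp add: zero_le_mult_iff)
qed

lemma final1:
  fixes g1 g2 g3 d r c hs y qm qb :: real
  assumes g1: "g1 > 0" and d: "d > 0" "d*d = g1*g3 - g2*g2" and r: "r > 0" and c: "c \<ge> 0"
    and qm: "qm \<ge> 0" and qb: "g1 * qb \<ge> d*d*y*y"
  shows "g1 + g3 + qm + qb + 2*r*d*\<bar>hs*y - c\<bar> \<ge> g1 + g3 + 2*r*c*d - r^2*hs^2*g1"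
proof -
  have "\<bar>hs*y - c\<bar> \<ge> c - hs*y" using abs_ge_minus_self[of "hs*y - c"] by simp
  then have a: "2*r*d*\<bar>hs*y - c\<bar> \<ge> 2*r*d*(c - hs*y)" using r d by simp
  have "g1 * (qb + 2*r*d*(c - hs*y) - 2*r*c*d + r^2*hs^2*g1) \<ge> d*d*y*y - 2*g1*r*d*hs*y + r^2*hs^2*g1*g1"
    using qb by (simp add: algebra_simps power2_eq_square)
  also have "d*d*y*y - 2*g1*r*d*hs*y + r^2*hs^2*g1*g1 = (d*y - r*hs*g1)^2" by (simp add: algebra_simps power2_eq_square)
  finally have "g1 * (qb + 2*r*d*(c - hs*y) - 2*r*c*d + r^2*hs^2*g1) \<ge> 0" by (metis zero_le_power2 order_trans)
  then have "qb + 2*r*d*(c - hs*y) - 2*r*c*d + r^2*hs^2*g1 \<ge> 0" using g1 by (simp add: zero_le_mult_iff)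
  then show ?thesis using a qm by linarith
qed

lemma final2:
  fixes g1 g3 d r c hs y qm qb :: real
  assumes g1: "g1 > 0" and d: "d > 0" and r: "r > 0" and c: "c \<ge> 0" and hs: "hs > 0"
    and cond: "\<not> r * g1 * hs^2 < d * c"
    and qm: "qm \<ge> 0" and qb: "g1 * qb \<ge> d*d*y*y"
  shows "g1 + g3 + qm + qb + 2*r*d*\<bar>hs*y - c\<bar> \<ge> g1 + g3 + d*d / g1 * (c/hs)^2"
proof -
  define z where "z = hs*y - c"
  have y: "hs * y = z + c" unfolding z_def by linarith
  have key: "g1*hs^2 * (qb + 2*r*d*\<bar>z\<bar>) \<ge> d*d*c*c"
  proof -
    have "hs^2 * (d*d*y*y) \<le> hs^2 * (g1*qb)" using qb by (intro mult_left_mono) simp_all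
    then have "g1*hs^2*qb \<ge> hs^2 * (d*d*y*y)" by (simp add: mult_ac)
    also have "hs^2 * (d*d*y*y) = d*d*(hs*y)*(hs*y)" by (simp add: power2_eq_square mult_ac)
    also have "\<dots> = d*d*(z+c)*(z+c)" using y by simp
    finally have 1: "g1*hs^2*qb \<ge> d*d*(z+c)*(z+c)" .
    have 2: "d*d*(z+c)*(z+c) + g1*hs^2*2*r*d*\<bar>z\<bar> - d*d*c*c \<ge> 0"
    proof (cases "z \<ge> 0")
      case True
      have "d*d*(z+c)*(z+c) - d*d*c*c = d*d*(z*z + 2*c*z)" by (simp add: algebra_simps)
      moreover have "d*d*(z*z + 2*c*z) \<ge> 0" using True c d by (intro mult_nonneg_nonneg add_nonneg_nonneg) simp_all
      moreover have "g1*hs^2*2*r*d*\<bar>z\<bar> \<ge> 0" using g1 r d by simp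
      ultimately show ?thesis by linarith
    next
      case False
      have "d*d*(z+c)*(z+c) + g1*hs^2*2*r*d*\<bar>z\<bar> - d*d*c*c = d*d*z*z + 2*d*(-z)*(r*g1*hs^2 - d*c)"
        using False by (simp add: algebra_simps)
      moreover have "r*g1*hs^2 - d*c \<ge> 0" using cond by simp
      moreover have "d*d*z*z \<ge> 0"
      proof -
        have "0 \<le> (d*z)*(d*z)" by (rule zero_le_square)
        then show ?thesis by (simp add: mult_ac)
      qed
      moreover have "2*d*(-z)*(r*g1*hs^2 - d*c) \<ge> 0"
        using False d \<open>r*g1*hs^2 - d*c \<ge> 0\<close> by (intro mult_nonneg_nonneg) simp_all
      ultimately show ?thesis by linarith
    qed
    have "g1*hs^2 * (qb + 2*r*d*\<bar>z\<bar>) = g1*hs^2*qb + g1*hs^2*2*r*d*\<bar>z\<bar>" by (simp add: algebra_simps)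
    then show ?thesis using 1 2 by linarith
  qed
  have pos: "g1*hs^2 > 0" using g1 hs by simp
  have "d*d / g1 * (c/hs)^2 = d*d*c*c / (g1*hs^2)" using hs by (simp add: power2_eq_square field_simps)
  also have "\<dots> \<le> qb + 2*r*d*\<bar>z\<bar>" unfolding pos_divide_le_eq[OF pos] using key by (simp add: mult.commute)
  finally have "d*d / g1 * (c/hs)^2 \<le> qb + 2*r*d*\<bar>hs*y - c\<bar>" unfolding z_def .
  then show ?thesis using qm by linarith
qed


definition Rf :: "real \<Rightarrow> real \<Rightarrow> real \<Rightarrow> real \<Rightarrow> real \<Rightarrow> real \<Rightarrow> real \<Rightarrow> real \<Rightarrow> real \<Rightarrow> real" where
  "Rf r pk sk uk vk pj sj uj vj = (1+r)/2 * pk * pj + (1-r)/2 * sk * sj + uk * uj + vk * vj"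

lemma R_decomp:
  fixes r \<sigma> pk sk uk vk pj sj uj vj :: real
  assumes "\<sigma>*\<sigma> = 1 - r*r"
  shows "Rf r pk sk uk vk pj sj uj vj = ((pk+sk)/2 + r*(pk-sk)/2) * ((pj+sj)/2 + r*(pj-sj)/2)
     + (\<sigma>*(pk-sk)/2) * (\<sigma>*(pj-sj)/2) + uk*uj + vk* vj"
proof -
  have "(\<sigma>*(pk-sk)/2) * (\<sigma>*(pj-sj)/2) = (\<sigma>*\<sigma>)*((pk-sk)/2)*((pj-sj)/2)" by (simp add: field_simps)
  also have "\<dots> = (1 - r*r)*((pk-sk)/2)*((pj-sj)/2)" using assms by simp
  finally have e: "(\<sigma>*(pk-sk)/2) * (\<sigma>*(pj-sj)/2) = (1 - r*r)*((pk-sk)/2)*((pj-sj)/2)" .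
  show ?thesis unfolding e by (simp add: Rf_def field_simps)
qed

lemma rot:
  fixes c hs v1 v2 W1 W2 :: real
  assumes cs: "c*c + hs*hs = 1" and k1: "hs*W1 - c* v1 = 0" and k2: "hs*W2 - c* v2 = 1"
  shows "v1 = hs*(c*W1 + hs* v1)" "W1 = c*(c*W1 + hs* v1)" "v2 = hs*(c*W2 + hs* v2) - c" "W2 = c*(c*W2+hs* v2) + hs"
proof -
  have "hs*(c*W1 + hs* v1) = c*(hs*W1) + hs*hs* v1" by (simp add: algebra_simps)
  also have "\<dots> = (c*c + hs*hs)* v1" using k1 by (simp add: algebra_simps)
  finally show "v1 = hs*(c*W1 + hs* v1)" using cs by simp
  have "c*(c*W1 + hs* v1) = c*c*W1 + hs*(c* v1)" by (simp add: algebra_simps)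
  also have "\<dots> = (c*c + hs*hs)*W1" using k1 by (simp add: algebra_simps)
  finally show "W1 = c*(c*W1 + hs* v1)" using cs by simp
  have "hs*(c*W2 + hs* v2) - c = c*(hs*W2) + hs*hs* v2 - c" by (simp add: algebra_simps)
  also have "\<dots> = c*(1 + c* v2) + hs*hs* v2 - c" using k2 by (simp add: algebra_simps)
  also have "\<dots> = (c*c + hs*hs)* v2" by (simp add: algebra_simps)
  finally show "v2 = hs*(c*W2 + hs* v2) - c" using cs by simp
  have "c*(c*W2+hs* v2) + hs = c*c*W2 + hs*(c* v2) + hs" by (simp add: algebra_simps)
  also have "\<dots> = c*c*W2 + hs*(hs*W2)" using k2 by (simp add: algebra_simps)
  also have "\<dots> = (c*c + hs*hs)*W2" by (simp add: algebra_simps)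
  finally show "W2 = c*(c*W2+hs* v2) + hs" using cs by simp
qed

lemma QG_rot:
  fixes c hs B1 B2 :: real
  assumes cs: "c*c + hs*hs = 1"
  shows "QG g1 g2 g3 (hs*B1) (hs*B2 - c) + QG g1 g2 g3 (c*B1) (c*B2 + hs) = g3 + QG g1 g2 g3 B1 B2"
proof -
  have "QG g1 g2 g3 (hs*B1) (hs*B2 - c) + QG g1 g2 g3 (c*B1) (c*B2 + hs) = (c*c+hs*hs) * QG g1 g2 g3 B1 B2 + g3*(c*c+hs*hs)"
    by (simp add: QG_def algebra_simps)
  then show ?thesis using cs by simp
qed

lemma decomp:
  fixes r \<sigma> c hs g1 g2 g3 p1 s1 u1 v1 p2 s2 u2 v2 :: real
  assumes sg: "\<sigma>*\<sigma> = 1 - r*r" and cs: "c*c + hs*hs = 1" and u: "u1 = 1" "u2 = 0"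
    and k1: "- c* v1 + hs*\<sigma>*(p1-s1)/2 = 0" and k2: "- c* v2 + hs*\<sigma>*(p2-s2)/2 = 1"
  defines "B1 \<equiv> c*(\<sigma>*(p1-s1)/2) + hs* v1" and "B2 \<equiv> c*(\<sigma>*(p2-s2)/2) + hs* v2"
  shows "g1 * Rf r p1 s1 u1 v1 p1 s1 u1 v1 + 2 * g2 * Rf r p1 s1 u1 v1 p2 s2 u2 v2 + g3 * Rf r p2 s2 u2 v2 p2 s2 u2 v2
          = g1 + g3 + QG g1 g2 g3 ((p1+s1)/2 + r*(p1-s1)/2) ((p2+s2)/2 + r*(p2-s2)/2) + QG g1 g2 g3 B1 B2"
    and "v2 = hs*B2 - c"
proof -
  define W1 where "W1 = \<sigma>*(p1-s1)/2"
  define W2 where "W2 = \<sigma>*(p2-s2)/2"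
  define m1 where "m1 = (p1+s1)/2 + r*(p1-s1)/2"
  define m2 where "m2 = (p2+s2)/2 + r*(p2-s2)/2"
  have kk1: "hs*W1 - c* v1 = 0" using k1 by (simp add: W1_def algebra_simps)
  have kk2: "hs*W2 - c* v2 = 1" using k2 by (simp add: W2_def algebra_simps)
  have B: "B1 = c*W1 + hs* v1" "B2 = c*W2 + hs* v2" by (simp_all add: B1_def B2_def W1_def W2_def)
  note rt = rot[OF cs kk1 kk2, folded B]
  show "v2 = hs*B2 - c" using rt by simp
  have e1: "g1 * Rf r p1 s1 u1 v1 p1 s1 u1 v1 + 2 * g2 * Rf r p1 s1 u1 v1 p2 s2 u2 v2 + g3 * Rf r p2 s2 u2 v2 p2 s2 u2 v2
     = QG g1 g2 g3 m1 m2 + QG g1 g2 g3 W1 W2 + QG g1 g2 g3 u1 u2 + QG g1 g2 g3 v1 v2"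
    unfolding R_decomp[OF sg] by (simp add: QG_def W1_def W2_def m1_def m2_def field_simps)
  have e2: "QG g1 g2 g3 u1 u2 = g1" using u by (simp add: QG_def)
  have e3: "QG g1 g2 g3 W1 W2 + QG g1 g2 g3 v1 v2 = QG g1 g2 g3 (hs*B1) (hs*B2 - c) + QG g1 g2 g3 (c*B1) (c*B2 + hs)"
    using rt by simp
  have e4: "QG g1 g2 g3 (hs*B1) (hs*B2 - c) + QG g1 g2 g3 (c*B1) (c*B2 + hs) = g3 + QG g1 g2 g3 B1 B2" using QG_rot[OF cs] by simp
  show "g1 * Rf r p1 s1 u1 v1 p1 s1 u1 v1 + 2 * g2 * Rf r p1 s1 u1 v1 p2 s2 u2 v2 + g3 * Rf r p2 s2 u2 v2 p2 s2 u2 v2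
          = g1 + g3 + QG g1 g2 g3 ((p1+s1)/2 + r*(p1-s1)/2) ((p2+s2)/2 + r*(p2-s2)/2) + QG g1 g2 g3 B1 B2"
    using e1 e2 e3 e4 unfolding m1_def m2_def by linarith
qed


definition xp :: "(2 \<Rightarrow> cmat) \<Rightarrow> 2 \<Rightarrow> real" where "xp X j = Re (X j $1$1)"
definition xs :: "(2 \<Rightarrow> cmat) \<Rightarrow> 2 \<Rightarrow> real" where "xs X j = Re (X j $2$2)"
definition xu :: "(2 \<Rightarrow> cmat) \<Rightarrow> 2 \<Rightarrow> real" where "xu X j = Re (X j $1$2)"
definition xv :: "(2 \<Rightarrow> cmat) \<Rightarrow> 2 \<Rightarrow> real" where "xv X j = Im (X j $1$2)"

lemma Rent:
  assumes "\<forall>i. hermitian (X i)"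
  shows "ReM (Zmat r X) $k$j = Rf r (xp X k) (xs X k) (xu X k) (xv X k) (xp X j) (xs X j) (xu X j) (xv X j)"
    and "ImM (Zmat r X) $k$j = r * (xv X k * xu X j - xu X k * xv X j)"
  using Z_ent[of X k j r] assms by (simp_all add: Rf_def xp_def xs_def xu_def xv_def)

lemma hC_formula:
  assumes G: "G = vector [vector [g1, g2], vector [g2, g3]]" "rpd G"
    and h: "hermitian (X 1)" "hermitian (X 2)"
  shows "holevoC r G X = g1 * Rf r (xp X 1) (xs X 1) (xu X 1) (xv X 1) (xp X 1) (xs X 1) (xu X 1) (xv X 1)
     + 2 * g2 * Rf r (xp X 1) (xs X 1) (xu X 1) (xv X 1) (xp X 2) (xs X 2) (xu X 2) (xv X 2)
     + g3 * Rf r (xp X 2) (xs X 2) (xu X 2) (xv X 2) (xp X 2) (xs X 2) (xu X 2) (xv X 2)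
     + 2 * \<bar>r * (xv X 1 * xu X 2 - xu X 1 * xv X 2)\<bar> * sqrt (det G)"
proof -
  let ?I = "ImM (Zmat r X)" and ?R = "ReM (Zmat r X)"
  have hall: "\<forall>i. hermitian (X i)" using h by (simp add: forall_2)
  have I: "?I$1$1 = 0" "?I$2$2 = 0" "?I$2$1 = - ?I$1$2"
    by (simp_all add: Rent[OF hall] algebra_simps)
  have "holevoC r G X = trace (G ** ?R) + 2 * \<bar>?I$1$2\<bar> * sqrt (det G)"
    unfolding holevoC_def by (rule holevo_red[OF G(2) I])
  moreover have "trace (G ** ?R) = g1 * ?R$1$1 + g2 * ?R$2$1 + g2 * ?R$1$2 + g3 * ?R$2$2"
    using G(1) by (simp add: trace2 mmul2)
  moreover have "?R$2$1 = ?R$1$2" by (simp add: Rent[OF hall] Rf_def mult_ac)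
  ultimately show ?thesis
    by (simp add: Rent[OF hall])
qed

lemma adm_iff:
  assumes D1: "D 1 = sigma 1" and D2: "D 2 = c *\<^sub>R sigma 2 + t *\<^sub>R sigma 3"
  shows "admissible D X \<longleftrightarrow> hermitian (X 1) \<and> hermitian (X 2) \<and> xu X 1 = 1 \<and> xu X 2 = 0
     \<and> - c * xv X 1 + t * (xp X 1 - xs X 1)/2 = 0 \<and> - c * xv X 2 + t * (xp X 2 - xs X 2)/2 = 1"
proof -
  have "admissible D X \<longleftrightarrow> hermitian (X 1) \<and> hermitian (X 2) \<and>
     trace (D 1 ** X 1) = 1 \<and> trace (D 1 ** X 2) = 0 \<and> trace (D 2 ** X 1) = 0 \<and> trace (D 2 ** X 2) = 1"
    unfolding admissible_def by (auto simp: forall_2)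
  also have "\<dots> \<longleftrightarrow> hermitian (X 1) \<and> hermitian (X 2) \<and> xu X 1 = 1 \<and> xu X 2 = 0
     \<and> - c * xv X 1 + t * (xp X 1 - xs X 1)/2 = 0 \<and> - c * xv X 2 + t * (xp X 2 - xs X 2)/2 = 1"
  proof (cases "hermitian (X 1) \<and> hermitian (X 2)")
    case True
    then show ?thesis unfolding D1 D2
      by (simp add: tr_D1 tr_D2 xp_def xs_def xu_def xv_def del: of_real_diff of_real_add of_real_mult of_real_minus)
  next
    case False
    then show ?thesis by blast
  qed
  finally show ?thesis .
qed


definition Xof :: "real \<Rightarrow> real \<Rightarrow> real \<Rightarrow> real \<Rightarrow> cmat" where
  "Xof p s u v = vector [vector [complex_of_real p, Complex u v], vector [Complex u (- v), complex_of_real s]]"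

lemma herm_Xof: "hermitian (Xof p s u v)"
  unfolding hermitian_def by (simp add: m2_eq cadj_def Xof_def complex_eq_iff)

lemma witness:
  fixes r \<sigma> c hs g1 g2 g3 B1 B2 :: real
  assumes G: "G = vector [vector [g1, g2], vector [g2, g3]]" "rpd G"
    and D1: "D 1 = sigma 1" and D2: "D 2 = c *\<^sub>R sigma 2 + (hs * \<sigma>) *\<^sub>R sigma 3"
    and sg: "\<sigma> > 0" "\<sigma>*\<sigma> = 1 - r*r" and cs: "c*c + hs*hs = 1"
  shows "\<exists>X. admissible D X \<and> holevoC r G X = g1 + g3 + QG g1 g2 g3 B1 B2 + 2 * \<bar>r * (hs * B2 - c)\<bar> * sqrt (det G)"
proof -
  define W1 where "W1 = c * B1"
  define W2 where "W2 = c * B2 + hs"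
  define v1 where "v1 = hs * B1"
  define v2 where "v2 = hs * B2 - c"
  define p1 where "p1 = (1-r) * (W1/\<sigma>)"
  define s1 where "s1 = - (1+r) * (W1/\<sigma>)"
  define p2 where "p2 = (1-r) * (W2/\<sigma>)"
  define s2 where "s2 = - (1+r) * (W2/\<sigma>)"
  define X where "X = (\<lambda>j::2. if j = 1 then Xof p1 s1 1 v1 else Xof p2 s2 0 v2)"
  have X1: "X 1 = Xof p1 s1 1 v1" and X2: "X 2 = Xof p2 s2 0 v2" by (simp_all add: X_def)
  have h: "hermitian (X 1)" "hermitian (X 2)" unfolding X1 X2 by (rule herm_Xof)+
  have xx: "xp X 1 = p1" "xs X 1 = s1" "xu X 1 = 1" "xv X 1 = v1"
           "xp X 2 = p2" "xs X 2 = s2" "xu X 2 = 0" "xv X 2 = v2"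
    by (simp_all add: X1 X2 Xof_def xp_def xs_def xu_def xv_def)
  have dif1: "\<sigma> * (p1 - s1) / 2 = W1" using sg(1) by (simp add: p1_def s1_def field_simps)
  have dif2: "\<sigma> * (p2 - s2) / 2 = W2" using sg(1) by (simp add: p2_def s2_def field_simps)
  have k1: "- c * v1 + hs * \<sigma> * (p1 - s1) / 2 = 0"
  proof -
    have "hs * \<sigma> * (p1 - s1) / 2 = hs * (\<sigma> * (p1 - s1) / 2)" by simp
    then show ?thesis unfolding dif1 by (simp add: W1_def v1_def algebra_simps)
  qed
  have k2: "- c * v2 + hs * \<sigma> * (p2 - s2) / 2 = 1"
  proof -
    have "hs * \<sigma> * (p2 - s2) / 2 = hs * (\<sigma> * (p2 - s2) / 2)" by simp
    then have "- c * v2 + hs * \<sigma> * (p2 - s2) / 2 = c*c + hs*hs" unfolding dif2 by (simp add: W2_def v2_def algebra_simps)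
    then show ?thesis using cs by simp
  qed
  have adm: "admissible D X"
    unfolding adm_iff[OF D1 D2] using h xx k1 k2 by simp
  note dc = decomp(1)[where ?g1.0=g1 and ?g2.0=g2 and ?g3.0=g3, OF sg(2) cs refl refl k1 k2]
  have m1: "(p1+s1)/2 + r*(p1-s1)/2 = 0" using sg(1) by (simp add: p1_def s1_def field_simps)
  have m2: "(p2+s2)/2 + r*(p2-s2)/2 = 0" using sg(1) by (simp add: p2_def s2_def field_simps)
  have b1: "c*(\<sigma>*(p1-s1)/2) + hs * v1 = B1" unfolding dif1 W1_def v1_def
  proof -
    have "c * (c * B1) + hs * (hs * B1) = (c*c + hs*hs) * B1" by (simp add: algebra_simps)
    then show "c * (c * B1) + hs * (hs * B1) = B1" using cs by simp
  qed
  have b2: "c*(\<sigma>*(p2-s2)/2) + hs * v2 = B2" unfolding dif2 W2_def v2_def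
  proof -
    have "c * (c * B2 + hs) + hs * (hs * B2 - c) = (c*c + hs*hs) * B2" by (simp add: algebra_simps)
    then show "c * (c * B2 + hs) + hs * (hs * B2 - c) = B2" using cs by simp
  qed
  have "holevoC r G X = g1 + g3 + QG g1 g2 g3 B1 B2 + 2 * \<bar>r * (hs * B2 - c)\<bar> * sqrt (det G)"
    unfolding hC_formula[OF G h] xx dc m1 m2 b1 b2 by (simp add: QG_def v2_def abs_mult abs_minus_commute)
  then show ?thesis using adm by blast
qed


lemma QG_opt:
  fixes g1 g2 g3 d y :: real
  assumes "g1 > 0" "d*d = g1*g3 - g2*g2"
  shows "QG g1 g2 g3 (- g2 * y / g1) y = d*d*y*y/g1"
proof -
  have "g1 * QG g1 g2 g3 (- g2 * y / g1) y = (g1*g3 - g2*g2)*y*y"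
    using assms(1) by (simp add: QG_def field_simps power2_eq_square)
  then have "g1 * QG g1 g2 g3 (- g2 * y / g1) y = d*d*y*y" using assms(2) by simp
  then show ?thesis using assms(1) by (simp add: eq_divide_eq mult.commute)
qed

lemma lower_all:
  fixes r \<sigma> c hs g1 g2 g3 :: real
  assumes G: "G = vector [vector [g1, g2], vector [g2, g3]]" "rpd G"
    and D1: "D 1 = sigma 1" and D2: "D 2 = c *\<^sub>R sigma 2 + (hs * \<sigma>) *\<^sub>R sigma 3"
    and sg: "\<sigma>*\<sigma> = 1 - r*r" and cs: "c*c + hs*hs = 1" and adm: "admissible D X"
  shows "\<exists>m1 m2 B1 B2. holevoC r G X = g1 + g3 + QG g1 g2 g3 m1 m2 + QG g1 g2 g3 B1 B2 + 2 * \<bar>r * (hs * B2 - c)\<bar> * sqrt (det G)"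
proof -
  have a: "hermitian (X 1)" "hermitian (X 2)" "xu X 1 = 1" "xu X 2 = 0"
     "- c * xv X 1 + hs * \<sigma> * (xp X 1 - xs X 1)/2 = 0" "- c * xv X 2 + hs * \<sigma> * (xp X 2 - xs X 2)/2 = 1"
    using adm unfolding adm_iff[OF D1 D2] by (simp_all add: mult.assoc)
  note dc = decomp(1)[where ?g1.0=g1 and ?g2.0=g2 and ?g3.0=g3, OF sg cs a(3,4,5,6)] decomp(2)[OF sg cs a(3,4,5,6)]
  have "holevoC r G X = g1 + g3 + QG g1 g2 g3 ((xp X 1 + xs X 1)/2 + r*(xp X 1 - xs X 1)/2) ((xp X 2 + xs X 2)/2 + r*(xp X 2 - xs X 2)/2)
      + QG g1 g2 g3 (c*(\<sigma>*(xp X 1 - xs X 1)/2) + hs * xv X 1) (c*(\<sigma>*(xp X 2 - xs X 2)/2) + hs * xv X 2)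
      + 2 * \<bar>r * (hs * (c*(\<sigma>*(xp X 2 - xs X 2)/2) + hs * xv X 2) - c)\<bar> * sqrt (det G)"
  proof -
    have h2: "g1 * Rf r (xp X 1) (xs X 1) (xu X 1) (xv X 1) (xp X 1) (xs X 1) (xu X 1) (xv X 1)
     + 2 * g2 * Rf r (xp X 1) (xs X 1) (xu X 1) (xv X 1) (xp X 2) (xs X 2) (xu X 2) (xv X 2)
     + g3 * Rf r (xp X 2) (xs X 2) (xu X 2) (xv X 2) (xp X 2) (xs X 2) (xu X 2) (xv X 2)
     = g1 + g3 + QG g1 g2 g3 ((xp X 1 + xs X 1)/2 + r*(xp X 1 - xs X 1)/2) ((xp X 2 + xs X 2)/2 + r*(xp X 2 - xs X 2)/2)
      + QG g1 g2 g3 (c*(\<sigma>*(xp X 1 - xs X 1)/2) + hs * xv X 1) (c*(\<sigma>*(xp X 2 - xs X 2)/2) + hs * xv X 2)"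
      by (rule dc(1))
    have h3: "\<bar>r * (xv X 1 * xu X 2 - xu X 1 * xv X 2)\<bar> = \<bar>r * (hs * (c*(\<sigma>*(xp X 2 - xs X 2)/2) + hs * xv X 2) - c)\<bar>"
      using dc(2) a(3,4) by (simp add: abs_mult abs_minus_commute)
    show ?thesis using hC_formula[OF G a(1,2)] h2 h3 by simp
  qed
  then show ?thesis by blast
qed


theorem mainTheorem10:
  fixes r \<phi> g1 g2 g3 :: real
    and \<theta> :: "real^2 \<Rightarrow> real^3" and H :: "(real^2) set" and \<eta>0 :: "real^2"
    and D\<rho> :: "real^2 \<Rightarrow> cmat"
  assumes r: "0 < r" "r < 1"
    and \<phi>: "0 \<le> \<phi>" "\<phi> \<le> pi/2"
    and H: "open H" "\<eta>0 \<in> H" "\<forall>\<eta>\<in>H. norm (\<theta> \<eta>) < 1"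
    and smooth: "\<theta> differentiable_on H"
    and at0: "\<theta> \<eta>0 = vector [0, 0, r]"
    and deriv: "((\<lambda>\<eta>. rho (\<theta> \<eta>)) has_derivative D\<rho>) (at \<eta>0)"
    and D1: "D\<rho> (axis 1 1) = sigma 1"
    and D2: "D\<rho> (axis 2 1) = cos \<phi> *\<^sub>R sigma 2 + (sin \<phi> * sqrt (1 - r\<^sup>2)) *\<^sub>R sigma 3"
    and G: "G = vector [vector [g1, g2], vector [g2, g3]]"
    and Gpd: "rpd G"
  shows "is_holevo_bound r (\<lambda>k. D\<rho> (axis k 1)) G
           (if r * g1 * (sin \<phi>)\<^sup>2 < sqrt (det G) * cos \<phi>
            then trace G + 2 * r * cos \<phi> * sqrt (det G) - r\<^sup>2 * (sin \<phi>)\<^sup>2 * g1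
            else trace G + det G / g1 * (cos \<phi> / sin \<phi>)\<^sup>2)"
proof -
  define D where "D = (\<lambda>k. D\<rho> (axis k 1))"
  define c where "c = cos \<phi>"
  define hs where "hs = sin \<phi>"
  define \<sigma> where "\<sigma> = sqrt (1 - r\<^sup>2)"
  have D1': "D 1 = sigma 1" using D1 by (simp add: D_def)
  have D2': "D 2 = c *\<^sub>R sigma 2 + (hs * \<sigma>) *\<^sub>R sigma 3" using D2 by (simp add: D_def c_def hs_def \<sigma>_def)
  have c0: "c \<ge> 0" unfolding c_def using \<phi> by (intro cos_ge_zero) simp_all
  have hs0: "hs \<ge> 0" unfolding hs_def using \<phi> by (intro sin_ge_zero) simp_all
  have cs: "c*c + hs*hs = 1" unfolding c_def hs_def by (simp add: sin_cos_squared_add3)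
  have r2: "r\<^sup>2 < 1" using r by (simp add: power_less_one_iff abs_less_iff)
  have sg0: "\<sigma> > 0" unfolding \<sigma>_def using r2 by simp
  have sg: "\<sigma>*\<sigma> = 1 - r*r" unfolding \<sigma>_def using r2 by (simp add: power2_eq_square)
  have Ge: "G$1$1 = g1" "G$1$2 = g2" "G$2$1 = g2" "G$2$2 = g3" using G by simp_all
  have g1: "g1 > 0" using rpd_facts(2)[OF Gpd] Ge by simp
  have detG: "det G = g1*g3 - g2*g2" using Ge by (simp add: det_2)
  have dpos: "det G > 0" using rpd_facts(3)[OF Gpd] Ge detG by simp
  have trG: "trace G = g1 + g3" using Ge by (simp add: trace2)
  define d where "d = sqrt (det G)"
  have d: "d > 0" "d*d = g1*g3 - g2*g2" using dpos detG by (auto simp: d_def)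
  have low1: "g1 + g3 + 2*r*c*d - r^2*hs^2*g1 \<le> holevoC r G X" if adm: "admissible D X" for X
  proof -
    obtain m1 m2 B1 B2 where e: "holevoC r G X = g1 + g3 + QG g1 g2 g3 m1 m2 + QG g1 g2 g3 B1 B2 + 2 * \<bar>r * (hs * B2 - c)\<bar> * d"
      using lower_all[OF G Gpd D1' D2' sg cs adm] unfolding d_def by blast
    have e2: "2 * \<bar>r * (hs * B2 - c)\<bar> * d = 2*r*d*\<bar>hs*B2 - c\<bar>" using r by (simp add: abs_mult)
    show ?thesis unfolding e e2
      by (rule final1[OF g1 d r(1) c0 QG_bound(2)[OF g1 d(2)] QG_bound(1)[OF g1 d(2)]])
  qed
  have low2: "g1 + g3 + d*d / g1 * (c/hs)^2 \<le> holevoC r G X"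
    if adm: "admissible D X" and hs: "hs > 0" and cond: "\<not> r * g1 * hs^2 < d * c" for X
  proof -
    obtain m1 m2 B1 B2 where e: "holevoC r G X = g1 + g3 + QG g1 g2 g3 m1 m2 + QG g1 g2 g3 B1 B2 + 2 * \<bar>r * (hs * B2 - c)\<bar> * d"
      using lower_all[OF G Gpd D1' D2' sg cs adm] unfolding d_def by blast
    have e2: "2 * \<bar>r * (hs * B2 - c)\<bar> * d = 2*r*d*\<bar>hs*B2 - c\<bar>" using r by (simp add: abs_mult)
    show ?thesis unfolding e e2
      by (rule final2[OF g1 d(1) r(1) c0 hs cond QG_bound(2)[OF g1 d(2)] QG_bound(1)[OF g1 d(2)]])
  qed
  show ?thesis
  proof (cases "r * g1 * hs^2 < d * c")
    case True
    define y where "y = r * hs * g1 / d"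
    obtain X where X: "admissible D X" "holevoC r G X = g1 + g3 + QG g1 g2 g3 (- g2 * y / g1) y + 2 * \<bar>r * (hs * y - c)\<bar> * sqrt (det G)"
      using witness[OF G Gpd D1' D2' sg0 sg cs] by blast
    have q: "QG g1 g2 g3 (- g2 * y / g1) y = r^2 * hs^2 * g1"
      unfolding QG_opt[OF g1 d(2)] y_def using d(1) g1 by (simp add: field_simps power2_eq_square)
    have hy: "hs * y < c"
    proof -
      have "hs * y = (r * g1 * hs^2) / d" by (simp add: y_def power2_eq_square field_simps)
      also have "\<dots> < c" using True d(1) by (simp add: divide_less_eq mult.commute)
      finally show ?thesis .
    qed
    have ab: "\<bar>r * (hs * y - c)\<bar> = r * (c - hs * y)" using hy r by (simp add: abs_mult)
    have yv: "hs * y * d = r * hs^2 * g1" using d(1) by (simp add: y_def power2_eq_square field_simps)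
    have val: "holevoC r G X = g1 + g3 + 2*r*c*d - r^2*hs^2*g1"
    proof -
      have "holevoC r G X = g1 + g3 + r^2*hs^2*g1 + 2 * r * (c - hs*y) * d"
        unfolding X(2) q ab d_def by simp
      also have "2 * r * (c - hs*y) * d = 2*r*c*d - 2*r*(hs*y*d)" by (simp add: algebra_simps)
      finally show ?thesis unfolding yv by (simp add: algebra_simps power2_eq_square)
    qed
    have cond': "r * g1 * (sin \<phi>)\<^sup>2 < sqrt (det G) * cos \<phi>" using True by (simp add: hs_def c_def d_def)
    have tgt: "trace G + 2 * r * cos \<phi> * sqrt (det G) - r\<^sup>2 * (sin \<phi>)\<^sup>2 * g1 = g1 + g3 + 2*r*c*d - r^2*hs^2*g1"
      by (simp add: trG c_def hs_def d_def)
    show ?thesis unfolding is_holevo_bound_def if_P[OF cond'] tgt D_def[symmetric]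
      using X(1) val low1 by blast
  next
    case False
    have hs: "hs > 0"
    proof (rule ccontr)
      assume "\<not> hs > 0"
      then have "hs = 0" using hs0 by simp
      then have "c*c = 1*1" using cs by simp
      then have "c = 1" using sq_eq_nonneg[of c 1] c0 by simp
      then show False using False \<open>hs = 0\<close> d(1) by simp
    qed
    define y where "y = c / hs"
    obtain X where X: "admissible D X" "holevoC r G X = g1 + g3 + QG g1 g2 g3 (- g2 * y / g1) y + 2 * \<bar>r * (hs * y - c)\<bar> * sqrt (det G)"
      using witness[OF G Gpd D1' D2' sg0 sg cs] by blast
    have hy: "hs * y = c" using hs by (simp add: y_def)
    have val: "holevoC r G X = g1 + g3 + d*d / g1 * (c/hs)^2"
      unfolding X(2) QG_opt[OF g1 d(2)] hy using g1 by (simp add: y_def power2_eq_square field_simps)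
    have cond': "\<not> r * g1 * (sin \<phi>)\<^sup>2 < sqrt (det G) * cos \<phi>" using False by (simp add: hs_def c_def d_def)
    have tgt: "trace G + det G / g1 * (cos \<phi> / sin \<phi>)\<^sup>2 = g1 + g3 + d*d / g1 * (c/hs)^2"
      using dpos by (simp add: trG c_def hs_def d_def)
    show ?thesis unfolding is_holevo_bound_def if_not_P[OF cond'] tgt D_def[symmetric]
      using X(1) val low2[OF _ hs False] by blast
  qed
qed


end
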